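(* For all $x,y\in\mathbb{B}^2$ with $x\neq y$, the lower bound for $\tilde\tau_{\mathbb{B}^2}(x,y)$ in the following piecewise form, $$L(x,y)=\begin{cases}\log\Big(1+2\sqrt{\frac{|x-y|\sqrt{|x+y|^2+|x-y|^2}}{4-|x+y|^2-|x-y|^2}}\Big), & \text{if } |x+y|\Big(1+\frac{4}{|x+y|^2+|x-y|^2}\Big)\le4,\\[2mm] \log\Big(1+\frac{2|x-y|}{\sqrt{(2-|x+y|)^2+|x-y|^2}}\Big), & \text{otherwise},\end{cases}$$ satisfies $$L(x,y)\ge\log\Big(1+\frac{2|x-y|}{\sqrt{4-|x-y|^2}}\Big).$$
   Context: $\mathbb{B}^2$ is the open unit disk in $\mathbb{R}^2$; $|\cdot|$ is the Euclidean norm. *)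

theory Defs
  imports "HOL-Analysis.Analysis"
begin

definition tau_lower :: "real^2 \<Rightarrow> real^2 \<Rightarrow> real" where
  "tau_lower x y =
    (let s = norm (x + y); d = norm (x - y) in
     if s * (1 + 4 / (s\<^sup>2 + d\<^sup>2)) \<le> 4
     then ln (1 + 2 * sqrt (d * sqrt (s\<^sup>2 + d\<^sup>2) / (4 - s\<^sup>2 - d\<^sup>2)))
     else ln (1 + 2 * d / sqrt ((2 - s)\<^sup>2 + d\<^sup>2)))"

end

theory Submission
  imports Defs
begin

lemma para: fixes x y :: "real^2"
  shows "(norm (x+y))\<^sup>2 + (norm (x-y))\<^sup>2 = 2*((norm x)\<^sup>2 + (norm y)\<^sup>2)"
  by (simp add: power2_norm_eq_inner inner_add_left inner_add_right inner_diff_left inner_diff_right inner_commute)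

lemma case1:
  fixes s d t :: real
  assumes "d > 0" "s \<ge> 0" "t = s\<^sup>2 + d\<^sup>2" "t < 4"
  shows "2 * d / sqrt (4 - d\<^sup>2) \<le> 2 * sqrt (d * sqrt t / (4 - t))"
proof -
  have d2: "d\<^sup>2 < 4" using assms(3,4) zero_le_power2[of s] by linarith
  have st: "d \<le> sqrt t" using assms by (simp add: real_le_rsqrt)
  have "d\<^sup>2 * (4 - t) \<le> d * sqrt t * (4 - d\<^sup>2)"
  proof -
    have "d * (4 - t) \<le> sqrt t * (4 - d\<^sup>2)"
      by (rule mult_mono) (use st assms d2 in \<open>auto simp: zero_le_power2\<close>)
    hence "d * (d * (4 - t)) \<le> d * (sqrt t * (4 - d\<^sup>2))"
      using assms by (intro mult_left_mono) auto
    thus ?thesis by (simp add: power2_eq_square algebra_simps)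
  qed
  hence le: "d\<^sup>2 / (4 - d\<^sup>2) \<le> d * sqrt t / (4 - t)"
    using d2 assms by (simp add: divide_simps)
  have "d / sqrt (4 - d\<^sup>2) = sqrt (d\<^sup>2 / (4 - d\<^sup>2))"
    using assms by (simp add: real_sqrt_divide)
  also have "\<dots> \<le> sqrt (d * sqrt t / (4 - t))" using le by simp
  finally show ?thesis by simp
qed

lemma case2:
  fixes s d t :: real
  assumes "d > 0" "s \<ge> 0" "t = s\<^sup>2 + d\<^sup>2" "t < 4" "\<not> s * (1 + 4 / t) \<le> 4"
  shows "2 * d / sqrt (4 - d\<^sup>2) \<le> 2 * d / sqrt ((2 - s)\<^sup>2 + d\<^sup>2)"
proof -
  have tp: "t > 0" using assms(1,3) zero_le_power2[of s] zero_less_power2[of d] by linarith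
  have "s\<^sup>2 < 4" using assms(3,4) zero_le_power2[of d] by linarith
  hence "s\<^sup>2 < 2\<^sup>2" by simp
  hence s2: "s < 2" by (rule power_less_imp_less_base) simp
  have e: "s * (1 + 4 / t) = s * (t + 4) / t" using tp by (simp add: field_simps)
  have "s * (t + 4) / t > 4" using assms(5) e by simp
  hence "s * (t + 4) > 4 * t" using tp by (simp add: pos_less_divide_eq)
  hence c: "4 * s > t * (4 - s)" by (simp add: algebra_simps)
  have "2 * t \<le> t * (4 - s)" using tp s2 by (simp add: algebra_simps)
  hence "s\<^sup>2 + 2 * d\<^sup>2 \<le> 4 * s" using c assms(3) zero_le_power2[of s] by linarith
  hence le: "(2 - s)\<^sup>2 + d\<^sup>2 \<le> 4 - d\<^sup>2" by (simp add: power2_eq_square algebra_simps)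
  have pos: "(2 - s)\<^sup>2 + d\<^sup>2 > 0" using assms(1) zero_le_power2[of "2-s"] zero_less_power2[of d] by linarith
  have "sqrt ((2 - s)\<^sup>2 + d\<^sup>2) \<le> sqrt (4 - d\<^sup>2)" using le by simp
  moreover have "sqrt ((2 - s)\<^sup>2 + d\<^sup>2) > 0" using pos by simp
  ultimately show ?thesis using assms(1)
    by (intro divide_left_mono) (auto intro: mult_pos_pos)
qed

theorem mainTheorem7:
  fixes x y :: "real^2"
  assumes "x \<in> ball 0 1" and "y \<in> ball 0 1" and "x \<noteq> y"
  shows "tau_lower x y \<ge> ln (1 + 2 * norm (x - y) / sqrt (4 - (norm (x - y))\<^sup>2))"
proof -
  define s where "s = norm (x + y)"
  define d where "d = norm (x - y)"
  define t where "t = s\<^sup>2 + d\<^sup>2"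
  have dp: "d > 0" using assms(3) by (simp add: d_def)
  have sp: "s \<ge> 0" by (simp add: s_def)
  have nx: "(norm x)\<^sup>2 < 1" using assms(1) by (simp add: abs_square_less_1)
  have ny: "(norm y)\<^sup>2 < 1" using assms(2) by (simp add: abs_square_less_1)
  have t4: "t < 4" using para[of x y] nx ny by (simp add: t_def s_def d_def)
  have d2: "d\<^sup>2 < 4" using t4 t_def zero_le_power2[of s] by linarith
  have "sqrt (4 - d\<^sup>2) > 0" using d2 by simp
  hence "2 * d / sqrt (4 - d\<^sup>2) > 0" using dp by simp
  hence rpos: "0 < 1 + 2 * d / sqrt (4 - d\<^sup>2)" by linarith
  show ?thesis
  proof (cases "s * (1 + 4 / t) \<le> 4")
    case True
    have "tau_lower x y = ln (1 + 2 * sqrt (d * sqrt t / (4 - t)))"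
      using True by (simp add: tau_lower_def Let_def s_def d_def t_def diff_diff_eq)
    moreover have "2 * d / sqrt (4 - d\<^sup>2) \<le> 2 * sqrt (d * sqrt t / (4 - t))"
      by (rule case1[OF dp sp t_def t4])
    ultimately show ?thesis using rpos by (simp add: d_def)
  next
    case False
    have "tau_lower x y = ln (1 + 2 * d / sqrt ((2 - s)\<^sup>2 + d\<^sup>2))"
      using False by (simp add: tau_lower_def Let_def s_def d_def t_def)
    moreover have "2 * d / sqrt (4 - d\<^sup>2) \<le> 2 * d / sqrt ((2 - s)\<^sup>2 + d\<^sup>2)"
      by (rule case2[OF dp sp t_def t4 False])
    ultimately show ?thesis using rpos by (simp add: d_def)
  qed
qed

end
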